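(* Consider the following perfect-information game between Learner, Reality and $N$ experts (Expert $1,\dots,$ Expert $N$). At each step $t=1,2,\dots$: each Expert $n$ ($n=1,\dots,N$) announces a prediction $\gamma_t^n\in[0,1]$, a number $\eta_t^n>0$, and a loss function $\lambda_t^n\in\mathcal{L}$ that is $\eta_t^n$-mixable; then Learner announces a prediction $\pi_t\in[0,1]$; then Reality announces an outcome $\omega_t\in\{0,1\}$. Learner has a strategy that guarantees that, for all $T\ge 1$ and all $n=1,\dots,N$, $$\sum_{t=1}^T \eta_t^n\bigl(\lambda_t^n(\pi_t,\omega_t)-\lambda_t^n(\gamma_t^n,\omega_t)\bigr)\le \ln N .$$
   Context: A loss function is a map $\lambda:[0,1]\times\{0,1\}\to[0,\infty]$ satisfying: (1) $\lambda(\gamma,0)$ and $\lambda(\gamma,1)$ are continuous in $\gamma\in[0,1]$ (with the standard topology on $[0,\infty]$); (2) there exists $\gamma\in[0,1]$ with $\lambda(\gamma,0)$ and $\lambda(\gamma,1)$ both finite; (3) there is no $\gamma\in[0,1]$ with $\lambda(\gamma,0)$ and $\lambda(\gamma,1)$ both infinite. The superprediction set of $\lambda$ is $\Sigma_\lambda=\{(x,y)\in[0,\infty)^2:\exists\gamma\in[0,1]\ \lambda(\gamma,0)\le x,\ \lambda(\gamma,1)\le y\}$. For $\eta>0$, $\lambda$ is $\eta$-mixable if the image of $\Sigma_\lambda$ under $(x,y)\mapsto(e^{-\eta x},e^{-\eta y})$ is convex; it is mixable if it is $\eta$-mixable for some $\eta>0$. $\lambda$ is proper (a proper scoring rule) if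 for all $\pi,\pi'\in[0,1]$: $\pi\lambda(\pi,1)+(1-\pi)\lambda(\pi,0)\le\pi\lambda(\pi',1)+(1-\pi)\lambda(\pi',0)$. $\mathcal{L}$ denotes the set of all loss functions that are both mixable and proper. *)

theory Defs
  imports "HOL-Analysis.Analysis" "HOL-Library.Extended_Nonnegative_Real"
begin

text \<open>Outcomes: False stands for 0, True stands for 1. Losses take values in [0,\<infinity>],
  rendered as ennreal (order topology = standard topology on [0,\<infinity>]).\<close>

type_synonym loss = "real \<Rightarrow> bool \<Rightarrow> ennreal"

definition is_loss :: "loss \<Rightarrow> bool" where
  "is_loss l \<longleftrightarrow>
     continuous_on {0..1} (\<lambda>g. l g False) \<and> continuous_on {0..1} (\<lambda>g. l g True) \<and>
     (\<exists>g\<in>{0..1}. l g False < \<infinity> \<and> l g True < \<infinity>) \<and>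
     \<not> (\<exists>g\<in>{0..1}. l g False = \<infinity> \<and> l g True = \<infinity>)"

definition superpred :: "loss \<Rightarrow> (real \<times> real) set" where
  "superpred l = {(x, y). 0 \<le> x \<and> 0 \<le> y \<and>
      (\<exists>g\<in>{0..1}. l g False \<le> ennreal x \<and> l g True \<le> ennreal y)}"

definition eta_mixable :: "real \<Rightarrow> loss \<Rightarrow> bool" where
  "eta_mixable eta l \<longleftrightarrow>
     convex ((\<lambda>(x, y). (exp (- eta * x), exp (- eta * y))) ` superpred l)"

definition mixable :: "loss \<Rightarrow> bool" where
  "mixable l \<longleftrightarrow> (\<exists>eta>0. eta_mixable eta l)"

definition proper :: "loss \<Rightarrow> bool" where
  "proper l \<longleftrightarrow> (\<forall>p\<in>{0..1}. \<forall>p'\<in>{0..1}.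
      ennreal p * l p True + ennreal (1 - p) * l p False
        \<le> ennreal p * l p' True + ennreal (1 - p) * l p' False)"

definition LL :: "loss set" where
  "LL = {l. is_loss l \<and> mixable l \<and> proper l}"

text \<open>An expert's move in one round: (prediction gamma, number eta, loss function).\<close>
type_synonym move = "real \<times> real \<times> loss"

text \<open>Learner's own past
  predictions are determined by the strategy and hence need not be part of the input.\<close>
type_synonym strategy = "((nat \<Rightarrow> move) \<times> bool) list \<Rightarrow> (nat \<Rightarrow> move) \<Rightarrow> real"

definition learner_pred :: "strategy \<Rightarrow> (nat \<Rightarrow> nat \<Rightarrow> move) \<Rightarrow> (nat \<Rightarrow> bool) \<Rightarrow> nat \<Rightarrow> real" where
  "learner_pred S E \<omega> t = S (map (\<lambda>s. (E s, \<omega> s)) [1..<t]) (E t)"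

end

theory Submission imports Defs begin

definition phi :: "real \<Rightarrow> ennreal \<Rightarrow> real" where
  "phi c x = (if x = top then 0 else exp (- c * enn2real x))"

lemma phi_nonneg: "phi c x \<ge> 0" by (simp add: phi_def)
lemma phi_pos: "x \<noteq> top \<Longrightarrow> phi c x > 0" by (simp add: phi_def)
lemma phi_top[simp]: "phi c top = 0" by (simp add: phi_def)
lemma phi_eq0: "phi c x = 0 \<longleftrightarrow> x = top" by (simp add: phi_def)
lemma phi_ennreal: "x \<ge> 0 \<Longrightarrow> phi c (ennreal x) = exp (- c * x)" by (simp add: phi_def)
lemma phi_anti: assumes "c > 0" "x \<le> y" shows "phi c y \<le> phi c x"
proof (cases "y = top")
  case True then show ?thesis by (simp add: phi_def)
next
  case False
  then have "x \<noteq> top" using assms top_unique by auto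
  moreover have "enn2real x \<le> enn2real y" using False assms enn2real_mono top.not_eq_extremum by blast
  ultimately show ?thesis using False assms by (simp add: phi_def)
qed

lemma phi_cont: assumes "c > 0" shows "continuous_on UNIV (phi c)"
proof -
  have "isCont (phi c) a" for a
  proof (cases "a = top")
    case False
    have ev: "eventually (\<lambda>x. x \<noteq> top) (at a)"
      using False by (intro eventually_at_topological[THEN iffD2]) (auto intro!: exI[of _ "{..<top}"] simp: top.not_eq_extremum)
    have "((\<lambda>x. exp (- c * enn2real x)) \<longlongrightarrow> exp (- c * enn2real a)) (at a)"
      using False by (intro tendsto_intros) (auto simp: less_top)
    then have "((\<lambda>x. exp (- c * enn2real x)) \<longlongrightarrow> phi c a) (at a)" using False by (simp add: phi_def)
    then show ?thesis unfolding isCont_def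
      by (rule tendsto_cong[THEN iffD1, rotated]) (use ev in \<open>auto elim!: eventually_mono simp: phi_def\<close>)
  next
    case True
    have "(phi c \<longlongrightarrow> 0) (at top)"
    proof (rule tendstoI)
      fix e :: real assume e: "e > 0"
      define M where "M = max 0 (- ln e / c + 1)"
      have M: "exp (- c * M) < e"
      proof -
        have "- c * M < ln e" using assms e unfolding M_def
          by (smt (verit, ccfv_SIG) mult_minus_left pos_divide_less_eq max.cobounded2 mult.commute mult_le_cancel_left_pos)
        then show ?thesis using e by (metis exp_less_cancel_iff exp_ln)
      qed
      have "eventually (\<lambda>x. x > ennreal M) (at (top::ennreal))"
        by (intro eventually_at_topological[THEN iffD2]) (auto intro!: exI[of _ "{ennreal M<..}"])
      then show "eventually (\<lambda>x. dist (phi c x) 0 < e) (at top)"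
      proof (rule eventually_mono)
        fix x assume x: "ennreal M < x"
        show "dist (phi c x) 0 < e"
        proof (cases "x = top")
          case True then show ?thesis using e by simp
        next
          case False
          have "M < enn2real x" using x False M_def
            by (metis ennreal_less_iff enn2real_nonneg ennreal_enn2real top.not_eq_extremum max.cobounded1 ennreal_less_iff less_le_trans)
          then have "exp (- c * enn2real x) < exp (- c * M)" using assms by simp
          then have "exp (- c * enn2real x) < e" using M by linarith
          moreover have "phi c x = exp (- c * enn2real x)" using False by (simp add: phi_def)
          ultimately show ?thesis using phi_nonneg[of c x] by (simp add: dist_real_def)
        qed
      qed
    qed
    then show ?thesis using True by (simp add: isCont_def)
  qed
  then show ?thesis by (simp add: continuous_at_imp_continuous_on)
qed

lemma deriv_nonpos:
  fixes f :: "real \<Rightarrow> real"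
  assumes d: "(f has_real_derivative D) (at x)"
    and ev: "eventually (\<lambda>y. f y \<le> f x) (at_right x)"
  shows "D \<le> 0"
proof -
  have "((\<lambda>y. (f y - f x) / (y - x)) \<longlongrightarrow> D) (at x)"
    using d has_field_derivative_iff by blast
  then have t: "((\<lambda>y. (f y - f x) / (y - x)) \<longlongrightarrow> D) (at_right x)"
    by (rule tendsto_mono[OF at_le, rotated]) auto
  have "eventually (\<lambda>y. (f y - f x) / (y - x) \<le> 0) (at_right x)"
    using ev eventually_at_right_less[of x]
    by eventually_elim (auto intro: divide_nonpos_pos)
  then show ?thesis using tendsto_upperbound[OF t] by auto
qed

lemma loss_finite_int:
  assumes "is_loss l" "proper l" "0 < p" "p < 1"
  shows "l p True \<noteq> top \<and> l p False \<noteq> top"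
proof -
  obtain g where g: "g \<in> {0..1}" "l g False < top" "l g True < top" using assms(1) unfolding is_loss_def by auto
  have "ennreal p * l p True + ennreal (1-p) * l p False \<le> ennreal p * l g True + ennreal (1-p) * l g False"
    using assms g unfolding proper_def by auto
  also have "\<dots> < top" using g by (simp add: ennreal_mult_less_top)
  finally have "ennreal p * l p True + ennreal (1-p) * l p False < top" .
  then show ?thesis using assms by (auto simp: ennreal_mult_less_top top.not_eq_extremum)
qed

lemma loss_proper0:
  assumes "proper l" "g \<in> {0..1}"
  shows "l 0 False \<le> l g False"
  using assms unfolding proper_def by (metis atLeastAtMost_iff diff_zero ennreal_0 ennreal_1 mult_1 mult_zero_left add_0 order_refl zero_le_one)

lemma loss_proper1:
  assumes "proper l" "g \<in> {0..1}"
  shows "l 1 True \<le> l g True"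
  using assms unfolding proper_def by (metis atLeastAtMost_iff diff_self ennreal_0 ennreal_1 mult_1 mult_zero_left add_0_right order_refl zero_le_one)

lemma loss_finite_01:
  assumes "is_loss l" "proper l"
  shows "l 0 False \<noteq> top" "l 1 True \<noteq> top"
proof -
  obtain g where g: "g \<in> {0..1}" "l g False < top" "l g True < top" using assms(1) unfolding is_loss_def by auto
  show "l 0 False \<noteq> top" using loss_proper0[OF assms(2) g(1)] g by (metis top.not_eq_extremum top_unique)
  show "l 1 True \<noteq> top" using loss_proper1[OF assms(2) g(1)] g by (metis top.not_eq_extremum top_unique)
qed

lemma superpred_mem:
  assumes "g \<in> {0..1}" "l g False \<noteq> top" "l g True \<noteq> top"
  shows "(enn2real (l g False), enn2real (l g True)) \<in> superpred l"
  using assms unfolding superpred_def by (auto intro!: bexI[of _ g] simp: less_top)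

lemma core:
  assumes L: "is_loss l" and P: "proper l" and M: "eta_mixable c l" and c: "c > 0"
    and p: "0 < p" "p < 1" and g: "g \<in> {0..1}" "l g True \<noteq> top" "l g False \<noteq> top"
  shows "p * (phi c (l g True) / phi c (l p True)) + (1-p) * (phi c (l g False) / phi c (l p False)) \<le> 1"
proof -
  have fin: "l p True \<noteq> top" "l p False \<noteq> top" using loss_finite_int[OF L P p] by auto
  define u0 where "u0 = phi c (l p False)"
  define u1 where "u1 = phi c (l p True)"
  define g0 where "g0 = phi c (l g False)"
  define g1 where "g1 = phi c (l g True)"
  define a0 where "a0 = enn2real (l p False)"
  define a1 where "a1 = enn2real (l p True)"
  have u0: "u0 = exp (- c * a0)" and u1: "u1 = exp (- c * a1)"
    using fin by (auto simp: u0_def u1_def a0_def a1_def phi_def)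
  have g0: "g0 = exp (- c * enn2real (l g False))" and g1: "g1 = exp (- c * enn2real (l g True))"
    using g by (auto simp: g0_def g1_def phi_def)
  have pos: "u0 > 0" "u1 > 0" "g0 > 0" "g1 > 0" using u0 u1 g0 g1 by auto
  define K where "K = (\<lambda>(x, y). (exp (- c * x), exp (- c * y))) ` superpred l"
  have cK: "convex K" using M unfolding eta_mixable_def K_def .
  have pK: "(u0, u1) \<in> K" unfolding K_def u0 u1 a0_def a1_def
    using superpred_mem[of p l] p fin by (auto intro!: image_eqI)
  have gK: "(g0, g1) \<in> K" unfolding K_def g0 g1
    using superpred_mem[of g l] g by (auto intro!: image_eqI)
  define f where "f = (\<lambda>e. (1-p) * ln ((1-e)*u0 + e*g0) + p * ln ((1-e)*u1 + e*g1))"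
  have opt: "f e \<le> f 0" if e: "0 \<le> e" "e \<le> 1" for e
  proof -
    have "(1-e) *\<^sub>R (u0, u1) + e *\<^sub>R (g0, g1) \<in> K"
      using convexD[OF cK pK gK, of "1-e" e] e by auto
    then obtain x y where xy: "(x, y) \<in> superpred l"
      and ex: "exp (- c * x) = (1-e)*u0 + e*g0" and ey: "exp (- c * y) = (1-e)*u1 + e*g1"
      unfolding K_def by auto
    from xy obtain q where q: "q \<in> {0..1}" "l q False \<le> ennreal x" "l q True \<le> ennreal y" "x \<ge> 0" "y \<ge> 0"
      unfolding superpred_def by auto
    have "ennreal p * l p True + ennreal (1-p) * l p False \<le> ennreal p * l q True + ennreal (1-p) * l q False"
      using P p q unfolding proper_def by auto
    also have "\<dots> \<le> ennreal p * ennreal y + ennreal (1-p) * ennreal x"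
      using q by (intro add_mono mult_left_mono) auto
    finally have le: "ennreal p * l p True + ennreal (1-p) * l p False \<le> ennreal p * ennreal y + ennreal (1-p) * ennreal x" .
    have e1: "l p True = ennreal a1" "l p False = ennreal a0" using fin unfolding a0_def a1_def by (auto simp: less_top)
    have a01: "a0 \<ge> 0" "a1 \<ge> 0" unfolding a0_def a1_def by auto
    have "ennreal (p * a1 + (1-p) * a0) \<le> ennreal (p * y + (1-p) * x)"
      using le p q a01 unfolding e1 by (simp add: ennreal_mult[symmetric] ennreal_plus[symmetric] del: ennreal_plus)
    then have ineq: "p * a1 + (1-p) * a0 \<le> p * y + (1-p) * x"
      using p q by (subst (asm) ennreal_le_iff) auto
    have "f e = (1-p) * (- c * x) + p * (- c * y)" unfolding f_def using ex ey by (metis ln_exp)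
    moreover have "f 0 = (1-p) * (- c * a0) + p * (- c * a1)" unfolding f_def u0 u1 by simp
    moreover have "c * (p * a1 + (1-p) * a0) \<le> c * (p * y + (1-p) * x)"
      using ineq c by (simp add: mult_left_mono)
    ultimately show ?thesis by (simp add: algebra_simps)
  qed
  define D where "D = (1-p) * ((g0 - u0) / u0) + p * ((g1 - u1) / u1)"
  have "(f has_real_derivative D) (at 0)"
  proof -
    have l: "((\<lambda>x. (1-x)*a + x*b) has_real_derivative (b - a)) (at 0)" for a b :: real
      by (auto intro!: derivative_eq_intros)
    have ln: "((\<lambda>x. ln ((1-x)*a + x*b)) has_real_derivative ((b - a) / a)) (at 0)" if "a > 0" for a b :: real
      using DERIV_chain2[OF DERIV_ln_divide l, of a b] that by simp
    show ?thesis unfolding f_def D_def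
      by (intro DERIV_add DERIV_cmult ln pos)
  qed
  moreover have "eventually (\<lambda>e. f e \<le> f 0) (at_right 0)"
    by (rule eventually_at_rightI[of 0 1]) (auto intro: opt)
  ultimately have "D \<le> 0" by (rule deriv_nonpos)
  then show ?thesis using pos unfolding D_def g0_def g1_def u0_def u1_def[symmetric]
    by (simp add: field_simps u1_def)
qed

lemma lim_right0:
  fixes h :: "real \<Rightarrow> real"
  assumes "continuous_on {0..1} h" "\<And>x. 0 < x \<Longrightarrow> x < 1 \<Longrightarrow> h x \<le> B"
  shows "h 0 \<le> B"
proof -
  have "(h \<longlongrightarrow> h 0) (at 0 within {0..1})" using assms(1) unfolding continuous_on_def by auto
  then have t: "(h \<longlongrightarrow> h 0) (at_right 0)" by (simp add: at_within_Icc_at_right)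
  have "eventually (\<lambda>x. h x \<le> B) (at_right 0)"
    by (rule eventually_at_rightI[of 0 1]) (auto intro: assms(2))
  then show ?thesis using tendsto_upperbound[OF t] by auto
qed

lemma lim_left1:
  fixes h :: "real \<Rightarrow> real"
  assumes "continuous_on {0..1} h" "\<And>x. 0 < x \<Longrightarrow> x < 1 \<Longrightarrow> h x \<le> B"
  shows "h 1 \<le> B"
proof -
  have "(h \<longlongrightarrow> h 1) (at 1 within {0..1})" using assms(1) unfolding continuous_on_def by auto
  then have t: "(h \<longlongrightarrow> h 1) (at_left 1)" by (simp add: at_within_Icc_at_left)
  have "eventually (\<lambda>x. h x \<le> B) (at_left 1)"
    by (rule eventually_at_leftI[of 0 1]) (auto intro: assms(2))
  then show ?thesis using tendsto_upperbound[OF t] by auto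
qed

lemma phi_loss_cont:
  assumes "is_loss l" "c > 0"
  shows "continuous_on {0..1} (\<lambda>x. phi c (l x w))"
proof -
  have "continuous_on {0..1} (\<lambda>x. l x w)" using assms(1) unfolding is_loss_def by (cases w) auto
  then show ?thesis by (rule continuous_on_compose2[OF phi_cont[OF assms(2)]]) auto
qed

definition Kt :: "real \<Rightarrow> real \<Rightarrow> loss \<Rightarrow> real \<Rightarrow> bool \<Rightarrow> ennreal" where
  "Kt g c l p w = ennreal (phi c (l g w)) * inverse (ennreal (phi c (l p w)))"

lemma Kt_real: "l p w \<noteq> top \<Longrightarrow> Kt g c l p w = ennreal (phi c (l g w) / phi c (l p w))"
  unfolding Kt_def using phi_pos[of "l p w" c] phi_nonneg[of c "l g w"]
  by (simp add: inverse_ennreal ennreal_mult[symmetric] divide_inverse)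

lemma key:
  assumes L: "is_loss l" and P: "proper l" and M: "eta_mixable c l" and c: "c > 0"
    and p: "p \<in> {0..1}" and g: "g \<in> {0..1}"
  shows "ennreal p * Kt g c l p True + ennreal (1-p) * Kt g c l p False \<le> 1"
proof -
  consider "p = 0" | "p = 1" | "0 < p \<and> p < 1" using p by fastforce
  then show ?thesis
  proof cases
    case 1
    have f: "l 0 False \<noteq> top" using loss_finite_01[OF L P] by auto
    have "phi c (l g False) \<le> phi c (l 0 False)" using phi_anti[OF c loss_proper0[OF P g]] .
    then have "phi c (l g False) / phi c (l 0 False) \<le> 1" using phi_pos[OF f, of c] by simp
    then show ?thesis using 1 by (simp add: Kt_real[of l 0 False, OF f])
  next
    case 2
    have f: "l 1 True \<noteq> top" using loss_finite_01[OF L P] by auto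
    have "phi c (l g True) \<le> phi c (l 1 True)" using phi_anti[OF c loss_proper1[OF P g]] .
    then have "phi c (l g True) / phi c (l 1 True) \<le> 1" using phi_pos[OF f, of c] by simp
    then show ?thesis using 2 by (simp add: Kt_real[of l 1 True, OF f])
  next
    case 3
    then have p0: "0 < p" "p < 1" by auto
    have fin: "l p True \<noteq> top" "l p False \<noteq> top" using loss_finite_int[OF L P p0] by auto
    define r1 where "r1 = phi c (l g True) / phi c (l p True)"
    define r0 where "r0 = phi c (l g False) / phi c (l p False)"
    have r: "r0 \<ge> 0" "r1 \<ge> 0" unfolding r0_def r1_def by (auto intro: divide_nonneg_nonneg phi_nonneg)
    have "p * r1 + (1-p) * r0 \<le> 1"
    proof (cases "l g True = top")
      case True
      have gF: "l g False \<noteq> top" using L g True unfolding is_loss_def by auto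
      have g0: "g = 0"
      proof (rule ccontr)
        assume "g \<noteq> 0"
        then have "0 < g" using g by auto
        then show False using True g loss_finite_int[OF L P, of g] loss_finite_01[OF L P] by (cases "g = 1") auto
      qed
      have "(1-p) * (phi c (l x False) / phi c (l p False)) \<le> 1" if "0 < x" "x < 1" for x
      proof -
        have "p * (phi c (l x True) / phi c (l p True)) + (1-p) * (phi c (l x False) / phi c (l p False)) \<le> 1"
          using core[OF L P M c p0, of x] that loss_finite_int[OF L P that] by auto
        moreover have "p * (phi c (l x True) / phi c (l p True)) \<ge> 0" using p0 phi_nonneg[of c "l x True"] phi_nonneg[of c "l p True"] phi_nonneg[of c "l x False"] phi_nonneg[of c "l p False"] by simp
        ultimately show ?thesis by linarith
      qed
      then have "(1-p) * (phi c (l 0 False) / phi c (l p False)) \<le> 1"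
        by (intro lim_right0[where h="\<lambda>x. (1-p) * (phi c (l x False) / phi c (l p False))"])
           (use phi_pos[OF fin(2), of c] in \<open>auto intro!: continuous_intros phi_loss_cont[OF L c]\<close>)
      then show ?thesis using True g0 unfolding r0_def r1_def by simp
    next
      case False
      note gT = False
      show ?thesis
      proof (cases "l g False = top")
        case False
        then show ?thesis using core[OF L P M c p0 g gT False] unfolding r0_def r1_def by simp
      next
        case True
        have g1: "g = 1"
        proof (rule ccontr)
          assume "g \<noteq> 1"
          then have "g < 1" using g by auto
          then show False using True g loss_finite_int[OF L P, of g] loss_finite_01[OF L P] by (cases "g = 0") auto
        qed
        have "p * (phi c (l x True) / phi c (l p True)) \<le> 1" if "0 < x" "x < 1" for x
        proof -
          have "p * (phi c (l x True) / phi c (l p True)) + (1-p) * (phi c (l x False) / phi c (l p False)) \<le> 1"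
            using core[OF L P M c p0, of x] that loss_finite_int[OF L P that] by auto
          moreover have "(1-p) * (phi c (l x False) / phi c (l p False)) \<ge> 0" using p0 phi_nonneg[of c "l x True"] phi_nonneg[of c "l p True"] phi_nonneg[of c "l x False"] phi_nonneg[of c "l p False"] by simp
          ultimately show ?thesis by linarith
        qed
        then have "p * (phi c (l 1 True) / phi c (l p True)) \<le> 1"
          by (intro lim_left1[where h="\<lambda>x. p * (phi c (l x True) / phi c (l p True))"])
             (use phi_pos[OF fin(1), of c] in \<open>auto intro!: continuous_intros phi_loss_cont[OF L c]\<close>)
        then show ?thesis using True g1 unfolding r0_def r1_def by simp
      qed
    qed
    moreover have "ennreal p * Kt g c l p True + ennreal (1-p) * Kt g c l p False = ennreal (p * r1 + (1-p) * r0)"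
      using p0 r unfolding Kt_real[of l p True, OF fin(1)] Kt_real[of l p False, OF fin(2)] r0_def[symmetric] r1_def[symmetric]
      by (simp add: ennreal_mult[symmetric] ennreal_plus[symmetric] del: ennreal_plus)
    ultimately show ?thesis by (simp add: ennreal_le_1)
  qed
qed

definition valid :: "nat \<Rightarrow> (nat \<Rightarrow> move) \<Rightarrow> bool" where
  "valid N m \<longleftrightarrow> (\<forall>n\<in>{1..N}. fst (m n) \<in> {0..1} \<and> fst (snd (m n)) > 0 \<and>
        snd (snd (m n)) \<in> LL \<and> eta_mixable (fst (snd (m n))) (snd (snd (m n))))"

definition Fsum :: "nat \<Rightarrow> (nat \<Rightarrow> real) \<Rightarrow> (nat \<Rightarrow> move) \<Rightarrow> real \<Rightarrow> bool \<Rightarrow> ennreal" where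
  "Fsum N w m p b = (\<Sum>n\<in>{1..N}. ennreal (w n) * Kt (fst (m n)) (fst (snd (m n))) (snd (snd (m n))) p b)"

lemma Fsum_comb:
  assumes v: "valid N m" and w: "\<forall>n\<in>{1..N}. w n \<ge> 0" and p: "p \<in> {0..1}"
  shows "ennreal p * Fsum N w m p True + ennreal (1-p) * Fsum N w m p False \<le> ennreal (\<Sum>n\<in>{1..N}. w n)"
proof -
  have "ennreal p * Fsum N w m p True + ennreal (1-p) * Fsum N w m p False
     = (\<Sum>n\<in>{1..N}. ennreal (w n) * (ennreal p * Kt (fst (m n)) (fst (snd (m n))) (snd (snd (m n))) p True
          + ennreal (1-p) * Kt (fst (m n)) (fst (snd (m n))) (snd (snd (m n))) p False))"
    unfolding Fsum_def by (simp add: sum_distrib_left sum.distrib distrib_left mult.assoc mult.left_commute)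
  also have "\<dots> \<le> (\<Sum>n\<in>{1..N}. ennreal (w n) * 1)"
  proof (intro sum_mono mult_left_mono)
    fix n assume n: "n \<in> {1..N}"
    then show "ennreal p * Kt (fst (m n)) (fst (snd (m n))) (snd (snd (m n))) p True
          + ennreal (1-p) * Kt (fst (m n)) (fst (snd (m n))) (snd (snd (m n))) p False \<le> 1"
      using v p unfolding valid_def LL_def by (intro key) auto
  qed auto
  also have "\<dots> = ennreal (\<Sum>n\<in>{1..N}. w n)" using w by (simp only: mult_1_right, subst sum_ennreal) auto
  finally show ?thesis .
qed

lemma Fsum_cont:
  assumes v: "valid N m" and w: "\<forall>n\<in>{1..N}. w n \<ge> 0"
  shows "continuous_on {0..1} (\<lambda>p. Fsum N w m p b)"
  unfolding Fsum_def Kt_def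
proof (intro continuous_on_sum)
  fix n assume n: "n \<in> {1..N}"
  let ?g = "fst (m n)" and ?c = "fst (snd (m n))" and ?l = "snd (snd (m n))"
  have L: "is_loss ?l" and c: "?c > 0" using v n unfolding valid_def LL_def by auto
  have "continuous_on {0..1} (\<lambda>p. (ennreal (w n) * ennreal (phi ?c (?l ?g b))) * inverse (ennreal (phi ?c (?l p b))))"
    by (intro ennreal_continuous_on_cmult continuous_on_inverse_ennreal continuous_on_ennreal phi_loss_cont[OF L c])
       (auto simp: ennreal_mult_less_top)
  then show "continuous_on {0..1} (\<lambda>p. ennreal (w n) * (ennreal (phi ?c (?l ?g b)) * inverse (ennreal (phi ?c (?l p b)))))"
    by (simp add: mult.assoc)
qed

lemma split_ineq:
  assumes p: "p \<in> {0..1}" and W: "W \<ge> 0" and le: "ennreal p * x + ennreal (1-p) * y \<le> ennreal W"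
  shows "x \<le> ennreal W \<or> y \<le> ennreal W"
proof (rule ccontr)
  assume "\<not> ?thesis"
  then have xy: "x > ennreal W" "y > ennreal W" by auto
  have ex: "\<exists>z. z > W \<and> ennreal z \<le> u" if "u > ennreal W" for u
  proof (cases "u = top")
    case True then show ?thesis by (intro exI[of _ "W+1"]) auto
  next
    case False
    then show ?thesis using that W
      by (intro exI[of _ "enn2real u"]) (auto simp: less_top ennreal_less_iff[symmetric] ennreal_enn2real)
  qed
  obtain x0 where x0: "x0 > W" "ennreal x0 \<le> x" using ex xy by blast
  obtain y0 where y0: "y0 > W" "ennreal y0 \<le> y" using ex xy by blast
  have "ennreal (p * x0 + (1-p) * y0) = ennreal p * ennreal x0 + ennreal (1-p) * ennreal y0"
    using p x0 y0 W by (simp add: ennreal_mult[symmetric] ennreal_plus[symmetric] del: ennreal_plus)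
  also have "\<dots> \<le> ennreal p * x + ennreal (1-p) * y" using x0 y0 by (intro add_mono mult_left_mono) auto
  also have "\<dots> \<le> ennreal W" by (rule le)
  finally have "p * x0 + (1-p) * y0 \<le> W" using W by (simp add: ennreal_le_iff)
  moreover have "p * x0 + (1-p) * y0 - W = p * (x0 - W) + (1-p) * (y0 - W)" by (simp add: algebra_simps)
  moreover have "p * (x0 - W) + (1-p) * (y0 - W) > 0"
  proof (cases "p = 0")
    case True then show ?thesis using y0 by simp
  next
    case False
    then have "p * (x0 - W) > 0" using p x0 by auto
    moreover have "(1-p) * (y0 - W) \<ge> 0" using p y0 by auto
    ultimately show ?thesis by linarith
  qed
  ultimately show False by linarith
qed

lemma exists_good:
  assumes v: "valid N m" and w: "\<forall>n\<in>{1..N}. w n \<ge> 0"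
  shows "\<exists>p\<in>{0..1}. \<forall>b. Fsum N w m p b \<le> ennreal (\<Sum>n\<in>{1..N}. w n)"
proof -
  let ?W = "ennreal (\<Sum>n\<in>{1..N}. w n)"
  define A where "A = {0..1} \<inter> (\<lambda>p. Fsum N w m p False) -` {..?W}"
  define B where "B = {0..1} \<inter> (\<lambda>p. Fsum N w m p True) -` {..?W}"
  have cA: "closed A" unfolding A_def by (intro continuous_closed_preimage Fsum_cont[OF v w]) auto
  have cB: "closed B" unfolding B_def by (intro continuous_closed_preimage Fsum_cont[OF v w]) auto
  have Wn: "(\<Sum>n\<in>{1..N}. w n) \<ge> 0" using w by (intro sum_nonneg) auto
  have cov: "{0..1} \<subseteq> A \<union> B"
  proof
    fix p :: real assume p: "p \<in> {0..1}"
    show "p \<in> A \<union> B" using split_ineq[OF p Wn Fsum_comb[OF v w p]] p unfolding A_def B_def by auto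
  qed
  have "0 \<in> A" using Fsum_comb[OF v w, of 0] unfolding A_def by simp
  moreover have "1 \<in> B" using Fsum_comb[OF v w, of 1] unfolding B_def by simp
  ultimately have "0 \<in> A \<inter> {0..1::real}" "1 \<in> B \<inter> {0..1::real}" by auto
  then have "A \<inter> B \<inter> {0..1} \<noteq> {}"
    using connected_closedD[OF connected_Icc _ cov cA cB] by blast
  then obtain p where "p \<in> A" "p \<in> B" by auto
  then show ?thesis unfolding A_def B_def by (intro bexI[of _ p]) (auto, metis (full_types))
qed

definition upd :: "(nat \<Rightarrow> real) \<Rightarrow> (nat \<Rightarrow> move) \<Rightarrow> real \<Rightarrow> bool \<Rightarrow> nat \<Rightarrow> real" where
  "upd w m p b n = w n * phi (fst (snd (m n))) (snd (snd (m n)) (fst (m n)) b)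
                      / phi (fst (snd (m n))) (snd (snd (m n)) p b)"

lemma upd_props:
  assumes v: "valid N m" and w: "\<forall>n\<in>{1..N}. w n \<ge> 0"
    and good: "Fsum N w m p b \<le> ennreal (\<Sum>n\<in>{1..N}. w n)"
  shows "(\<Sum>n\<in>{1..N}. upd w m p b n) \<le> (\<Sum>n\<in>{1..N}. w n)"
    and "\<forall>n\<in>{1..N}. upd w m p b n \<ge> 0"
    and "\<forall>n\<in>{1..N}. w n > 0 \<longrightarrow> snd (snd (m n)) (fst (m n)) b \<noteq> top \<longrightarrow> snd (snd (m n)) p b \<noteq> top"
proof -
  define T where "T n = ennreal (w n) * Kt (fst (m n)) (fst (snd (m n))) (snd (snd (m n))) p b" for n
  have Fs: "Fsum N w m p b = (\<Sum>n\<in>{1..N}. T n)" unfolding Fsum_def T_def ..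
  have Tfin: "T n \<noteq> top" if n: "n \<in> {1..N}" for n
  proof -
    have "T n \<le> (\<Sum>n\<in>{1..N}. T n)" by (rule member_le_sum[OF n]) auto
    also have "\<dots> < top" using good Fs by (simp add: le_less_trans)
    finally show ?thesis by simp
  qed
  have nn: "upd w m p b n \<ge> 0" if "n \<in> {1..N}" for n
    using w that unfolding upd_def by (auto intro!: divide_nonneg_nonneg mult_nonneg_nonneg phi_nonneg)
  have Teq: "T n = ennreal (upd w m p b n)" and alive: "w n > 0 \<longrightarrow> snd (snd (m n)) (fst (m n)) b \<noteq> top \<longrightarrow> snd (snd (m n)) p b \<noteq> top"
    if n: "n \<in> {1..N}" for n
  proof -
    let ?g = "fst (m n)" and ?c = "fst (snd (m n))" and ?l = "snd (snd (m n))"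
    have "T n = ennreal (upd w m p b n) \<and> (w n > 0 \<longrightarrow> ?l ?g b \<noteq> top \<longrightarrow> ?l p b \<noteq> top)"
    proof (cases "?l p b = top")
      case False
      then have "T n = ennreal (upd w m p b n)"
        unfolding T_def Kt_real[of ?l p b, OF False] upd_def using w n
        by (simp add: ennreal_mult[symmetric] phi_nonneg)
      then show ?thesis using False by simp
    next
      case True
      have "T n = ennreal (w n * phi ?c (?l ?g b)) * top"
        unfolding T_def Kt_def True using w n by (simp add: ennreal_mult phi_nonneg mult.assoc)
      note Ttop = this
      have "w n * phi ?c (?l ?g b) = 0"
      proof (rule ccontr)
        assume a: "w n * phi ?c (?l ?g b) \<noteq> 0"
        have "w n * phi ?c (?l ?g b) \<ge> 0" using w n phi_nonneg by simp
        then have "w n * phi ?c (?l ?g b) > 0" using a by linarith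
        then have "ennreal (w n * phi ?c (?l ?g b)) \<noteq> 0" by (metis ennreal_eq_0_iff not_le)
        then have "T n = top" using Ttop by (simp add: ennreal_mult_top)
        then show False using Tfin[OF n] by simp
      qed
      then show ?thesis using True w n unfolding T_def Kt_def upd_def
        by (auto simp: phi_eq0 ennreal_mult phi_nonneg)
    qed
    then show "T n = ennreal (upd w m p b n)" "w n > 0 \<longrightarrow> ?l ?g b \<noteq> top \<longrightarrow> ?l p b \<noteq> top" by auto
  qed
  have "ennreal (\<Sum>n\<in>{1..N}. upd w m p b n) = (\<Sum>n\<in>{1..N}. T n)"
    using Teq nn by (subst sum_ennreal[symmetric]) auto
  then have "ennreal (\<Sum>n\<in>{1..N}. upd w m p b n) \<le> ennreal (\<Sum>n\<in>{1..N}. w n)" using good Fs by simp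
  moreover have "(\<Sum>n\<in>{1..N}. w n) \<ge> 0" using w by (intro sum_nonneg) auto
  ultimately show "(\<Sum>n\<in>{1..N}. upd w m p b n) \<le> (\<Sum>n\<in>{1..N}. w n)" by (simp add: ennreal_le_iff)
  show "\<forall>n\<in>{1..N}. upd w m p b n \<ge> 0" using nn by auto
  show "\<forall>n\<in>{1..N}. w n > 0 \<longrightarrow> snd (snd (m n)) (fst (m n)) b \<noteq> top \<longrightarrow> snd (snd (m n)) p b \<noteq> top"
    using alive by auto
qed

lemma emul: "c > 0 \<Longrightarrow> x \<noteq> top \<Longrightarrow> ennreal c * x = ennreal (c * enn2real x)"
  by (subst ennreal_mult) (auto simp: less_top)

definition pickp :: "nat \<Rightarrow> (nat \<Rightarrow> real) \<Rightarrow> (nat \<Rightarrow> move) \<Rightarrow> real" where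
  "pickp N w m = (SOME p. p \<in> {0..1} \<and> (\<forall>b. Fsum N w m p b \<le> ennreal (\<Sum>n\<in>{1..N}. w n)))"

definition stepw :: "nat \<Rightarrow> (nat \<Rightarrow> real) \<Rightarrow> (nat \<Rightarrow> move) \<times> bool \<Rightarrow> nat \<Rightarrow> real" where
  "stepw N w mb = upd w (fst mb) (pickp N w (fst mb)) (snd mb)"

definition Wt :: "nat \<Rightarrow> ((nat \<Rightarrow> move) \<times> bool) list \<Rightarrow> nat \<Rightarrow> real" where
  "Wt N hs = foldl (stepw N) (\<lambda>n. 1) hs"

definition Strat :: "nat \<Rightarrow> strategy" where
  "Strat N hs m = pickp N (Wt N hs) m"

lemma pick_good:
  assumes "valid N m" "\<forall>n\<in>{1..N}. w n \<ge> 0"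
  shows "pickp N w m \<in> {0..1} \<and> (\<forall>b. Fsum N w m (pickp N w m) b \<le> ennreal (\<Sum>n\<in>{1..N}. w n))"
  unfolding pickp_def by (rule someI_ex) (use exists_good[OF assms] in blast)

theorem theorem2:
  fixes N :: nat
  shows "\<exists>S :: strategy. \<forall>(E :: nat \<Rightarrow> nat \<Rightarrow> move) (\<omega> :: nat \<Rightarrow> bool).
    (\<forall>t\<ge>1. \<forall>n\<in>{1..N}.
        fst (E t n) \<in> {0..1} \<and> fst (snd (E t n)) > 0 \<and>
        snd (snd (E t n)) \<in> LL \<and> eta_mixable (fst (snd (E t n))) (snd (snd (E t n))))
    \<longrightarrow> (\<forall>t\<ge>1. learner_pred S E \<omega> t \<in> {0..1}) \<and>
        (\<forall>T\<ge>1. \<forall>n\<in>{1..N}.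
          (\<Sum>t=1..T. ennreal (fst (snd (E t n))) * snd (snd (E t n)) (learner_pred S E \<omega> t) (\<omega> t))
          \<le> (\<Sum>t=1..T. ennreal (fst (snd (E t n))) * snd (snd (E t n)) (fst (E t n)) (\<omega> t))
             + ennreal (ln (real N)))"
proof (rule exI[of _ "Strat N"], intro allI impI)
  fix E :: "nat \<Rightarrow> nat \<Rightarrow> move" and \<omega> :: "nat \<Rightarrow> bool"
  assume H: "\<forall>t\<ge>1. \<forall>n\<in>{1..N}.
        fst (E t n) \<in> {0..1} \<and> fst (snd (E t n)) > 0 \<and>
        snd (snd (E t n)) \<in> LL \<and> eta_mixable (fst (snd (E t n))) (snd (snd (E t n)))"
  define eta where "eta t n = fst (snd (E t n))" for t n
  define los where "los t n = snd (snd (E t n))" for t n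
  define gam where "gam t n = fst (E t n)" for t n
  define P where "P t = learner_pred (Strat N) E \<omega> t" for t
  have v: "valid N (E t)" if "t \<ge> 1" for t using H that unfolding valid_def by auto
  define V where "V T = Wt N (map (\<lambda>s. (E s, \<omega> s)) [1..<Suc T])" for T
  have V0: "V 0 = (\<lambda>n. 1)" unfolding V_def Wt_def by simp
  have VS: "V (Suc T) = stepw N (V T) (E (Suc T), \<omega> (Suc T))" for T
    unfolding V_def Wt_def by (simp add: upt_Suc_append)
  have PS: "P (Suc T) = pickp N (V T) (E (Suc T))" for T
    unfolding P_def learner_pred_def Strat_def V_def by simp
  define I where "I T \<longleftrightarrow> (\<forall>n\<in>{1..N}. V T n \<ge> 0) \<and> (\<Sum>n\<in>{1..N}. V T n) \<le> real N \<and>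
     (\<forall>n\<in>{1..N}. (\<exists>t\<in>{1..T}. los t n (gam t n) (\<omega> t) = top) \<or>
        ((\<forall>t\<in>{1..T}. los t n (P t) (\<omega> t) \<noteq> top) \<and>
         V T n = exp (\<Sum>t=1..T. eta t n * (enn2real (los t n (P t) (\<omega> t)) - enn2real (los t n (gam t n) (\<omega> t))))))" for T
  have inv: "I T" for T
  proof (induction T)
    case 0
    show ?case unfolding I_def V0 by simp
  next
    case (Suc T)
    have nn: "\<forall>n\<in>{1..N}. V T n \<ge> 0" and sm: "(\<Sum>n\<in>{1..N}. V T n) \<le> real N"
      and al: "\<forall>n\<in>{1..N}. (\<exists>t\<in>{1..T}. los t n (gam t n) (\<omega> t) = top) \<or>
        ((\<forall>t\<in>{1..T}. los t n (P t) (\<omega> t) \<noteq> top) \<and>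
         V T n = exp (\<Sum>t=1..T. eta t n * (enn2real (los t n (P t) (\<omega> t)) - enn2real (los t n (gam t n) (\<omega> t)))))"
      using Suc unfolding I_def by auto
    have vS: "valid N (E (Suc T))" using v by simp
    have cg: "P (Suc T) \<in> {0..1} \<and> (\<forall>b. Fsum N (V T) (E (Suc T)) (P (Suc T)) b \<le> ennreal (\<Sum>n\<in>{1..N}. V T n))"
      unfolding PS by (rule pick_good[OF vS nn])
    have VSu: "V (Suc T) = upd (V T) (E (Suc T)) (P (Suc T)) (\<omega> (Suc T))"
      unfolding VS stepw_def PS by simp
    note U = upd_props[OF vS nn conjunct2[OF cg, rule_format, of "\<omega> (Suc T)"]]
    have "\<forall>n\<in>{1..N}. V (Suc T) n \<ge> 0" using U(2) unfolding VSu by auto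
    moreover have "(\<Sum>n\<in>{1..N}. V (Suc T) n) \<le> real N" using U(1) sm unfolding VSu by linarith
    moreover have "(\<exists>t\<in>{1..Suc T}. los t n (gam t n) (\<omega> t) = top) \<or>
        ((\<forall>t\<in>{1..Suc T}. los t n (P t) (\<omega> t) \<noteq> top) \<and>
         V (Suc T) n = exp (\<Sum>t=1..Suc T. eta t n * (enn2real (los t n (P t) (\<omega> t)) - enn2real (los t n (gam t n) (\<omega> t)))))"
      if n: "n \<in> {1..N}" for n
    proof (cases "\<exists>t\<in>{1..T}. los t n (gam t n) (\<omega> t) = top")
      case True then show ?thesis by auto
    next
      case False
      then have fT: "\<forall>t\<in>{1..T}. los t n (P t) (\<omega> t) \<noteq> top"
        and VT: "V T n = exp (\<Sum>t=1..T. eta t n * (enn2real (los t n (P t) (\<omega> t)) - enn2real (los t n (gam t n) (\<omega> t))))"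
        using al n by auto
      show ?thesis
      proof (cases "los (Suc T) n (gam (Suc T) n) (\<omega> (Suc T)) = top")
        case True then show ?thesis by auto
      next
        case gfin: False
        have pfin: "los (Suc T) n (P (Suc T)) (\<omega> (Suc T)) \<noteq> top"
          using U(3) n VT gfin unfolding los_def gam_def by auto
        have all: "\<forall>t\<in>{1..Suc T}. los t n (P t) (\<omega> t) \<noteq> top"
          using fT pfin by (metis atLeastAtMost_iff le_Suc_eq)
        define S where "S = (\<Sum>t=1..T. eta t n * (enn2real (los t n (P t) (\<omega> t)) - enn2real (los t n (gam t n) (\<omega> t))))"
        have "V (Suc T) n = exp S * phi (eta (Suc T) n) (los (Suc T) n (gam (Suc T) n) (\<omega> (Suc T)))
             / phi (eta (Suc T) n) (los (Suc T) n (P (Suc T)) (\<omega> (Suc T)))"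
          unfolding VSu upd_def VT S_def eta_def los_def gam_def ..
        also have "\<dots> = exp (S + eta (Suc T) n * (enn2real (los (Suc T) n (P (Suc T)) (\<omega> (Suc T))) - enn2real (los (Suc T) n (gam (Suc T) n) (\<omega> (Suc T)))))"
        proof -
          define c0 where "c0 = eta (Suc T) n"
          define ag where "ag = enn2real (los (Suc T) n (gam (Suc T) n) (\<omega> (Suc T)))"
          define ap where "ap = enn2real (los (Suc T) n (P (Suc T)) (\<omega> (Suc T)))"
          have "phi (eta (Suc T) n) (los (Suc T) n (gam (Suc T) n) (\<omega> (Suc T))) = exp (- c0 * ag)"
            using gfin unfolding phi_def c0_def ag_def by simp
          moreover have "phi (eta (Suc T) n) (los (Suc T) n (P (Suc T)) (\<omega> (Suc T))) = exp (- c0 * ap)"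
            using pfin unfolding phi_def c0_def ap_def by simp
          moreover have "exp S * exp (- c0 * ag) / exp (- c0 * ap) = exp (S + (- c0 * ag) - (- c0 * ap))"
            by (simp only: exp_add exp_diff)
          moreover have "S + (- c0 * ag) - (- c0 * ap) = S + c0 * (ap - ag)" by (simp add: algebra_simps)
          ultimately show ?thesis unfolding c0_def ag_def ap_def by simp
        qed
        finally show ?thesis using all unfolding S_def by simp
      qed
    qed
    ultimately show ?case unfolding I_def by blast
  qed
  have r1: "(\<forall>t\<ge>1. learner_pred (Strat N) E \<omega> t \<in> {0..1})"
  proof (intro allI impI)
    fix t :: nat assume t: "t \<ge> 1"
    then obtain T where T: "t = Suc T" by (cases t) auto
    have "P (Suc T) \<in> {0..1}" unfolding PS
      using pick_good[OF v[of "Suc T"]] inv[of T] unfolding I_def by auto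
    then show "learner_pred (Strat N) E \<omega> t \<in> {0..1}" using T unfolding P_def by simp
  qed
  have r2: "\<forall>T\<ge>1. \<forall>n\<in>{1..N}.
          (\<Sum>t=1..T. ennreal (eta t n) * los t n (P t) (\<omega> t))
          \<le> (\<Sum>t=1..T. ennreal (eta t n) * los t n (gam t n) (\<omega> t))
             + ennreal (ln (real N))"
  proof (intro allI impI ballI)
    fix T n :: nat assume T: "T \<ge> 1" and n: "n \<in> {1..N}"
    have etapos: "eta t n > 0" if "t \<ge> 1" for t using H that n unfolding eta_def by auto
    have IT: "I T" by (rule inv)
    show "(\<Sum>t=1..T. ennreal (eta t n) * los t n (P t) (\<omega> t))
          \<le> (\<Sum>t=1..T. ennreal (eta t n) * los t n (gam t n) (\<omega> t))
             + ennreal (ln (real N))"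
    proof (cases "\<exists>t\<in>{1..T}. los t n (gam t n) (\<omega> t) = top")
      case True
      then obtain t where t: "t \<in> {1..T}" "los t n (gam t n) (\<omega> t) = top" by auto
      have "ennreal (eta t n) * los t n (gam t n) (\<omega> t) = top"
        using t etapos[of t] by (simp add: ennreal_mult_top)
      moreover have "ennreal (eta t n) * los t n (gam t n) (\<omega> t) \<le> (\<Sum>t=1..T. ennreal (eta t n) * los t n (gam t n) (\<omega> t))"
        by (rule member_le_sum[OF t(1)]) auto
      ultimately have "(\<Sum>t=1..T. ennreal (eta t n) * los t n (gam t n) (\<omega> t)) = top"
        by (metis top_unique)
      then show ?thesis by (simp only: add_top_left_ennreal top_greatest)
    next
      case False
      then have fT: "\<forall>t\<in>{1..T}. los t n (P t) (\<omega> t) \<noteq> top"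
        and VT: "V T n = exp (\<Sum>t=1..T. eta t n * (enn2real (los t n (P t) (\<omega> t)) - enn2real (los t n (gam t n) (\<omega> t))))"
        using IT n unfolding I_def by auto
      define A where "A = (\<Sum>t=1..T. eta t n * enn2real (los t n (P t) (\<omega> t)))"
      define B where "B = (\<Sum>t=1..T. eta t n * enn2real (los t n (gam t n) (\<omega> t)))"
      have B0: "B \<ge> 0" unfolding B_def using etapos by (intro sum_nonneg) (simp add: less_imp_le)
      have eA: "(\<Sum>t=1..T. ennreal (eta t n) * los t n (P t) (\<omega> t)) = ennreal A"
      proof -
        have "(\<Sum>t=1..T. ennreal (eta t n) * los t n (P t) (\<omega> t)) = (\<Sum>t=1..T. ennreal (eta t n * enn2real (los t n (P t) (\<omega> t))))"
          by (rule sum.cong[OF refl], rule emul) (use fT etapos in auto)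
        also have "\<dots> = ennreal A" unfolding A_def using etapos by (intro sum_ennreal) (simp add: less_imp_le)
        finally show ?thesis .
      qed
      have eB: "(\<Sum>t=1..T. ennreal (eta t n) * los t n (gam t n) (\<omega> t)) = ennreal B"
      proof -
        have "(\<Sum>t=1..T. ennreal (eta t n) * los t n (gam t n) (\<omega> t)) = (\<Sum>t=1..T. ennreal (eta t n * enn2real (los t n (gam t n) (\<omega> t))))"
          by (rule sum.cong[OF refl], rule emul) (use False etapos in auto)
        also have "\<dots> = ennreal B" unfolding B_def using etapos by (intro sum_ennreal) (simp add: less_imp_le)
        finally show ?thesis .
      qed
      have "V T n \<le> (\<Sum>n\<in>{1..N}. V T n)" by (rule member_le_sum[OF n]) (use IT in \<open>auto simp: I_def\<close>)
      also have "\<dots> \<le> real N" using IT unfolding I_def by blast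
      finally have "exp (A - B) \<le> real N" using VT unfolding A_def B_def
        by (simp add: sum_subtractf right_diff_distrib)
      moreover have N0: "real N > 0" using n by auto
      ultimately have "A - B \<le> ln (real N)" by (metis exp_le_cancel_iff exp_ln)
      moreover have "ln (real N) \<ge> 0" using n by auto
      ultimately have "ennreal A \<le> ennreal B + ennreal (ln (real N))"
        using B0 by (simp add: ennreal_plus[symmetric] ennreal_leI del: ennreal_plus)
      then show ?thesis using eA eB by simp
    qed
  qed
  show "(\<forall>t\<ge>1. learner_pred (Strat N) E \<omega> t \<in> {0..1}) \<and>
        (\<forall>T\<ge>1. \<forall>n\<in>{1..N}.
          (\<Sum>t=1..T. ennreal (fst (snd (E t n))) * snd (snd (E t n)) (learner_pred (Strat N) E \<omega> t) (\<omega> t))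
          \<le> (\<Sum>t=1..T. ennreal (fst (snd (E t n))) * snd (snd (E t n)) (fst (E t n)) (\<omega> t))
             + ennreal (ln (real N)))"
    by (rule conjI[OF r1 r2[unfolded eta_def los_def gam_def P_def]])
qed

end
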